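(* Let $\mathbf{H}\in\mathbb{R}^{n\times m}$ be a random matrix (of arbitrary distribution not depending on $\rho$), $\mathbf{v}\sim\mathcal{N}(\mathbf{0},\rho^{-1}\mathbf{I}_n)$ independent of $\mathbf{H}$, $\mathbf{y}=\mathbf{H}\mathbf{e}+\mathbf{v}$, and let $\tau$ be as defined in the context (a function of $\mathbf{H}$ only). Let $d\in[0,\infty)$. If $\Pr(\tau\le\rho^{-1})\ \dot\le\ \rho^{-d}$, then $\Pr(\hat{\mathbf{s}}_{\mathrm{SDR}}\neq\mathbf{e})\ \dot\le\ \rho^{-d}$.
   Context: $\mathbf{e}$ is the all-ones vector. $\mathcal{X}=\{\mathbf{X}\in\mathbb{S}^{m+1}:\mathrm{diag}(\mathbf{X})=\mathbf{e},\mathbf{X}\succeq\mathbf{0}\}$, $\mathbf{M}=[\mathbf{I}_m\ -\mathbf{e}]$, $\mathcal{H}=\{\mathbf{X}\in\mathbb{S}^{m+1}:\mathrm{Tr}(\mathbf{M}\mathbf{X}\mathbf{M}^T)=1\}$, $\mathbf{L}_0=\mathbf{M}^T\mathbf{H}^T\mathbf{H}\mathbf{M}$, $\tau=\min_{\mathbf{X}\in\mathcal{X}\cap\mathcal{H}}\mathrm{Tr}(\mathbf{L}_0\mathbf{X})$. The SDR estimate: with $\mathbf{L}=\begin{bmatrix}\mathbf{H}^T\mathbf{H}&-\mathbf{H}^T\mathbf{y}\\-\mathbf{y}^T\mathbf{H}&\mathbf{y}^T\mathbf{y}\end{bmatrix}$ and $\mathbf{X}^\star$ an optimal point (fixed selection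 rule) of $\min_{\mathbf{X}\in\mathcal{X}}\mathrm{Tr}(\mathbf{L}\mathbf{X})$, $[\hat{\mathbf{s}}_{\mathrm{SDR}}]_i=\mathrm{sgn}([\mathbf{X}^\star]_{i,m+1})$ ($\mathrm{sgn}(x)=1$ if $x>0$, $-1$ otherwise). Notation: $f(\rho)\ \dot\le\ \rho^{-d}$ means $\limsup_{\rho\to\infty}\ln f(\rho)/\ln\rho\le -d$. *)

theory Defs
  imports "HOL-Analysis.Analysis" "HOL-Probability.Probability"
begin

text \<open>Matrices of size (m+1) x (m+1) are indexed by the type 'm option:
  index Some i stands for i in {1..m}, index None stands for m+1.
  H :: real^'m^'n is an n x m matrix (rows indexed by 'n).\<close>

type_synonym 'm sqm = "real^('m option)^('m option)"

definition ones :: "real^'k" where "ones = (\<chi> i. 1)"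

definition psd :: "real^'k^'k \<Rightarrow> bool" where
  "psd X \<longleftrightarrow> (\<forall>x. x \<bullet> (X *v x) \<ge> 0)"

definition SDPset :: "('m::finite) sqm set" where
  "SDPset = {X. transpose X = X \<and> (\<forall>i. X $ i $ i = 1) \<and> psd X}"

definition Mmat :: "real^('m::finite option)^'m" where
  "Mmat = (\<chi> i j. case j of Some k \<Rightarrow> (if k = i then 1 else 0) | None \<Rightarrow> -1)"

definition Hset :: "('m::finite) sqm set" where
  "Hset = {X. trace (Mmat ** X ** transpose Mmat) = 1}"

definition L0mat :: "real^'m^'n \<Rightarrow> ('m::finite) sqm" where
  "L0mat H = transpose Mmat ** transpose H ** H ** Mmat"

definition tau :: "real^('m::finite)^('n::finite) \<Rightarrow> real" where
  "tau H = Inf ((\<lambda>X. trace (L0mat H ** X)) ` (SDPset \<inter> Hset))"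

definition Lmat :: "real^('m::finite)^('n::finite) \<Rightarrow> real^'n \<Rightarrow> 'm sqm" where
  "Lmat H y = (\<chi> i j. case (i, j) of
       (Some a, Some b) \<Rightarrow> (transpose H ** H) $ a $ b
     | (Some a, None) \<Rightarrow> - ((transpose H *v y) $ a)
     | (None, Some b) \<Rightarrow> - ((transpose H *v y) $ b)
     | (None, None) \<Rightarrow> y \<bullet> y)"

definition is_selection_rule :: "('m sqm \<Rightarrow> ('m::finite) sqm) \<Rightarrow> bool" where
  "is_selection_rule sel \<longleftrightarrow>
     (\<forall>L. sel L \<in> SDPset \<and> (\<forall>X\<in>SDPset. trace (L ** sel L) \<le> trace (L ** X)))"

definition sgn1 :: "real \<Rightarrow> real" where
  "sgn1 x = (if x > 0 then 1 else -1)"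

definition s_sdr :: "('m sqm \<Rightarrow> ('m::finite) sqm) \<Rightarrow> real^'m^('n::finite) \<Rightarrow> real^'n \<Rightarrow> real^'m" where
  "s_sdr sel H y = (\<chi> i. sgn1 (sel (Lmat H y) $ Some i $ None))"

definition gauss_vec :: "real \<Rightarrow> (real^('n::finite)) measure" where
  "gauss_vec \<rho> = density lborel
     (\<lambda>v. ennreal (\<Prod>i\<in>UNIV. normal_density 0 (sqrt (1 / \<rho>)) (v $ i)))"

definition lnE :: "real \<Rightarrow> ereal" where
  "lnE x = (if x > 0 then ereal (ln x) else -\<infinity>)"

definition exp_le :: "(real \<Rightarrow> real) \<Rightarrow> real \<Rightarrow> bool" where
  "exp_le f d \<longleftrightarrow> Limsup at_top (\<lambda>\<rho>. lnE (f \<rho>) / ereal (ln \<rho>)) \<le> ereal (- d)"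

end

theory Submission
  imports Defs "HOL-Real_Asymp.Real_Asymp"
begin


definition qf :: "real^'c^'c \<Rightarrow> real^'c \<Rightarrow> real" where
  "qf X x = x \<bullet> (X *v x)"

lemma qf_sum: "qf X x = (\<Sum>l\<in>UNIV. \<Sum>j\<in>UNIV. x$l * X$l$j * x$j)"
  by (simp add: qf_def inner_vec_def matrix_vector_mult_def sum_distrib_left mult.assoc)

lemma trace_PXPt:
  fixes P :: "real^'c^'k" and X :: "real^'c^'c"
  shows "trace (P ** X ** transpose P) = (\<Sum>k\<in>UNIV. qf X (P$k))"
  unfolding qf_sum trace_def matrix_matrix_mult_def transpose_def
  apply (simp add: sum_distrib_left sum_distrib_right)
  apply (rule sum.cong, simp)
  apply (subst sum.swap)
  apply (rule sum.cong, simp)+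
  apply (simp add: mult.commute mult.left_commute)
  done

lemma trace_PtPX:
  fixes P :: "real^'c^'k" and X :: "real^'c^'c"
  assumes "transpose X = X"
  shows "trace (transpose P ** P ** X) = (\<Sum>k\<in>UNIV. qf X (P$k))"
proof -
  have s: "\<And>i j. X$i$j = X$j$i" using assms by (metis transpose_def vec_lambda_beta)
  show ?thesis
  unfolding qf_sum trace_def matrix_matrix_mult_def transpose_def
  apply (simp add: sum_distrib_left sum_distrib_right)
  apply (simp add: s mult.commute mult.left_commute)
  apply (rule trans[OF sum.cong[OF refl sum.swap]])
  apply (rule sum.swap)
  done
qed

lemma qf_parallel: "qf X (a + b) + qf X (a - b) = 2 * qf X a + 2 * qf X b"
  by (simp add: qf_def matrix_vector_right_distrib matrix_vector_mult_diff_distrib inner_add_left inner_add_right inner_diff_left inner_diff_right)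

lemma qf_lin: "qf (c *\<^sub>R X + d *\<^sub>R Y) x = c * qf X x + d * qf Y x"
  by (simp add: qf_sum algebra_simps sum.distrib sum_distrib_left)


lemma qf_nonneg: "psd X \<Longrightarrow> qf X x \<ge> 0"
  by (simp add: psd_def qf_def)

lemma sum_option: "(\<Sum>i\<in>(UNIV::'a::finite option set). f i) = f None + (\<Sum>a\<in>UNIV. f (Some a))"
proof -
  have "sum f (UNIV::'a option set) = sum f (insert None (Some ` UNIV))" by (metis UNIV_option_conv)
  then show ?thesis by (simp add: sum.reindex)
qed

lemma mv_axis: "(X *v axis b t) $ a = X$a$b * (t::real)"
  by (simp add: matrix_vector_mult_def axis_def if_distrib cong: if_cong)
lemma axis_inner: "axis a s \<bullet> w = s * w$a"
  by (simp add: inner_commute inner_axis mult.commute)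
lemma qf_axis2:
  fixes X :: "real^'c^'c"
  shows "qf X (axis a s + axis b t) = s * s * X$a$a + s * t * X$a$b + t * s * X$b$a + t * t * X$b$b"
  by (simp add: qf_def matrix_vector_right_distrib inner_add_left inner_add_right axis_inner mv_axis algebra_simps)

lemma qf_axis1:
  fixes X :: "real^'c^'c"
  shows "qf X (axis a s) = s * s * X$a$a"
  by (simp add: qf_def axis_inner mv_axis)

definition Jm :: "real^'c^'c" where "Jm = (\<chi> i j. 1)"

lemma qf_J: "qf Jm x = (sum (\<lambda>i. x$i) UNIV)^2"
  by (simp add: qf_sum Jm_def power2_eq_square sum_product)

lemma J_psd: "psd Jm"
  unfolding psd_def by (metis qf_J qf_def zero_le_power2)

lemma J_SDP: "Jm \<in> SDPset"
  using J_psd by (simp add: SDPset_def Jm_def transpose_def vec_eq_iff)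

lemma SDP_sym: "X \<in> SDPset \<Longrightarrow> X$i$j = X$j$i"
  unfolding SDPset_def by (metis (mono_tags, lifting) mem_Collect_eq transpose_def vec_lambda_beta)

lemma SDP_le1:
  assumes "X \<in> SDPset" "a \<noteq> b"
  shows "X$a$b \<le> 1"
proof -
  have "qf X (axis a 1 + axis b (-1)) \<ge> 0" using assms by (intro qf_nonneg) (auto simp: SDPset_def)
  then show ?thesis using assms SDP_sym[OF assms(1), of a b] by (auto simp: qf_axis2 SDPset_def)
qed

definition Gm :: "real^'m^'n \<Rightarrow> real^'n \<Rightarrow> real^('m option)^'n" where
  "Gm H y = (\<chi> k j. case j of Some a \<Rightarrow> H$k$a | None \<Rightarrow> - y$k)"

lemma Lmat_eq: "Lmat H y = transpose (Gm H y) ** Gm H y"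
  unfolding vec_eq_iff
  apply (intro allI)
  subgoal for i j
    by (cases i; cases j) (simp_all add: Lmat_def Gm_def matrix_matrix_mult_def transpose_def
        matrix_vector_mult_def inner_vec_def sum_negf mult.commute)
  done

lemma L0_eq: "L0mat H = transpose (H ** Mmat) ** (H ** Mmat)"
  by (simp add: L0mat_def matrix_transpose_mul matrix_mul_assoc)

lemma row_eq: "(H ** Mmat) $ k = Gm H (H *v ones + v) $ k + v$k *\<^sub>R axis None 1"
  unfolding vec_eq_iff
  apply (intro allI)
  subgoal for j
    by (cases j) (simp_all add: Gm_def Mmat_def matrix_matrix_mult_def matrix_vector_mult_def ones_def
       axis_def if_distrib if_distribR sum.delta sum.delta' sum_negf cong: if_cong)
  done

lemma Mrow: "(Mmat :: real^('m::finite option)^'m) $ i = axis (Some i) 1 + axis None (-1)"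
  by (simp add: vec_eq_iff Mmat_def axis_def split: option.splits)


lemma scale_axis: "c *\<^sub>R axis a (1::real) = axis a c"
  by (simp add: vec_eq_iff axis_def)

lemma qf_axisN: "qf X (c *\<^sub>R axis a 1) = c * c * X$a$a"
  by (simp only: scale_axis qf_axis1)

lemma sum_J_G: "sum (\<lambda>i. Gm H (H *v ones + v) $ k $ i) UNIV = - v$k"
  by (simp add: sum_option Gm_def matrix_vector_mult_def ones_def)

lemma sum_J_M: "sum (\<lambda>j. (Mmat :: real^('m::finite option)^'m) $ i $ j) UNIV = 0"
  by (simp add: sum_option Mmat_def)

lemma sum_J_row: "sum (\<lambda>j. (H ** Mmat) $ k $ j) UNIV = 0"
  using sum_J_G[of H 0 k] row_eq[of H k 0] by simp

lemma trace_nonneg_L0: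
  assumes "X \<in> SDPset"
  shows "trace (L0mat H ** X) \<ge> 0"
proof -
  have "trace (L0mat H ** X) = (\<Sum>k\<in>UNIV. qf X ((H ** Mmat)$k))"
    using assms by (simp add: L0_eq trace_PtPX SDPset_def)
  also have "\<dots> \<ge> 0" using assms by (intro sum_nonneg qf_nonneg) (auto simp: SDPset_def)
  finally show ?thesis .
qed

lemma det_bound:
  fixes H :: "real^('m::finite)^('n::finite)" and sel :: "'m sqm \<Rightarrow> 'm sqm"
  assumes sel: "is_selection_rule sel"
    and err: "s_sdr sel H (H *v ones + v) \<noteq> ones"
  shows "tau H \<le> 2 * (v \<bullet> v)"
proof -
  define y where "y = H *v ones + v"
  define L where "L = Lmat H y"
  define X where "X = sel L"
  define G where "G = Gm H y"
  define A where "A = H ** Mmat"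
  have XS: "X \<in> SDPset" and Xopt: "trace (L ** X) \<le> trace (L ** Jm)"
    using sel J_SDP unfolding is_selection_rule_def X_def by blast+
  have Xsym: "transpose X = X" and Xd: "\<And>i. X$i$i = 1" and Xpsd: "psd X"
    using XS by (auto simp: SDPset_def)
  have Jsym: "transpose (Jm::'m sqm) = Jm" by (simp add: Jm_def transpose_def vec_eq_iff)
  have trLX: "trace (L ** X) = (\<Sum>k\<in>UNIV. qf X (G$k))"
    unfolding L_def G_def Lmat_eq using Xsym by (rule trace_PtPX)
  have "trace (L ** Jm) = (\<Sum>k\<in>UNIV. qf Jm (G$k))"
    unfolding L_def G_def Lmat_eq using Jsym by (rule trace_PtPX)
  also have "\<dots> = (\<Sum>k\<in>UNIV. (v$k)^2)"
    by (simp add: qf_J G_def y_def sum_J_G)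
  also have "\<dots> = v \<bullet> v" by (simp add: inner_vec_def power2_eq_square)
  finally have trLJ: "trace (L ** Jm) = v \<bullet> v" .
  have trL0X: "trace (L0mat H ** X) = (\<Sum>k\<in>UNIV. qf X (A$k))"
    unfolding L0_eq A_def using Xsym by (rule trace_PtPX)
  have rowk: "A$k = G$k + v$k *\<^sub>R axis None 1" for k
    unfolding A_def G_def y_def by (rule row_eq)
  have qA: "qf X (A$k) \<le> 2 * qf X (G$k) + 2 * (v$k * v$k)" for k
  proof -
    have "qf X (G$k + v$k *\<^sub>R axis None 1) + qf X (G$k - v$k *\<^sub>R axis None 1)
        = 2 * qf X (G$k) + 2 * qf X (v$k *\<^sub>R axis None 1)" by (rule qf_parallel)
    moreover have "qf X (G$k - v$k *\<^sub>R axis None 1) \<ge> 0" using Xpsd by (rule qf_nonneg)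
    moreover have "qf X (v$k *\<^sub>R axis None 1) = v$k * v$k" using Xd by (simp add: qf_axisN)
    ultimately show ?thesis unfolding rowk by linarith
  qed
  have "trace (L0mat H ** X) \<le> (\<Sum>k\<in>UNIV. 2 * qf X (G$k) + 2 * (v$k * v$k))"
    unfolding trL0X by (rule sum_mono) (rule qA)
  also have "\<dots> = 2 * trace (L ** X) + 2 * (v \<bullet> v)"
    by (simp add: trLX sum.distrib sum_distrib_left inner_vec_def)
  finally have L0X: "trace (L0mat H ** X) \<le> 4 * (v \<bullet> v)" using Xopt trLJ by linarith
  have "\<exists>i. \<not> X $ Some i $ None > 0"
    using err unfolding s_sdr_def X_def L_def y_def
    by (auto simp: vec_eq_iff ones_def sgn1_def split: if_splits)
  then obtain i0 where i0: "X $ Some i0 $ None \<le> 0" by (auto simp: not_less)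
  define t where "t = trace (Mmat ** X ** transpose Mmat)"
  have qM: "qf X (Mmat$i) = 2 - 2 * X $ Some i $ None" for i
    using Xd SDP_sym[OF XS, of None "Some i"] by (simp add: Mrow qf_axis2)
  have tsum: "t = (\<Sum>i\<in>UNIV. 2 - 2 * X $ Some i $ None)"
    unfolding t_def trace_PXPt qM ..
  have "2 - 2 * X $ Some i0 $ None \<le> t"
    unfolding tsum
    by (rule member_le_sum) (use SDP_le1[OF XS, of "Some _" None] in auto)
  then have t2: "t \<ge> 2" using i0 by linarith
  define Xl where "Xl = (1/t) *\<^sub>R X + (1 - 1/t) *\<^sub>R (Jm :: 'm sqm)"
  have Xlsym: "transpose Xl = Xl"
    using Xsym Jsym unfolding Xl_def by (simp add: vec_eq_iff transpose_def)
  have Xlpsd: "psd Xl"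
    unfolding psd_def
  proof
    fix x
    have "qf Xl x = (1/t) * qf X x + (1 - 1/t) * qf Jm x" unfolding Xl_def by (rule qf_lin)
    moreover have "qf X x \<ge> 0" "qf Jm x \<ge> 0" using Xpsd J_psd by (auto intro: qf_nonneg)
    ultimately have "qf Xl x \<ge> 0" using t2 by (simp add: add_nonneg_nonneg)
    then show "x \<bullet> (Xl *v x) \<ge> 0" by (simp add: qf_def)
  qed
  have XlS: "Xl \<in> SDPset"
    using Xlsym Xlpsd Xd t2 unfolding SDPset_def Xl_def by (simp add: Jm_def)
  have "trace (Mmat ** Xl ** transpose Mmat) = (\<Sum>i\<in>UNIV. (1/t) * qf X (Mmat$i) + (1 - 1/t) * qf Jm (Mmat$i))"
    unfolding trace_PXPt Xl_def qf_lin ..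
  also have "\<dots> = (1/t) * t"
    by (simp add: qf_J sum_J_M t_def trace_PXPt sum_distrib_left)
  also have "\<dots> = 1" using t2 by simp
  finally have XlH: "Xl \<in> Hset" by (simp add: Hset_def)
  have "trace (L0mat H ** Xl) = (\<Sum>k\<in>UNIV. qf Xl (A$k))"
    unfolding L0_eq A_def using Xlsym by (rule trace_PtPX)
  also have "\<dots> = (\<Sum>k\<in>UNIV. (1/t) * qf X (A$k) + (1 - 1/t) * qf Jm (A$k))"
    unfolding Xl_def qf_lin ..
  also have "\<dots> = (1/t) * trace (L0mat H ** X)"
    by (simp add: qf_J A_def sum_J_row trL0X[unfolded A_def] sum_distrib_left)
  also have "\<dots> \<le> (1/2) * (4 * (v \<bullet> v))"
    using t2 L0X trace_nonneg_L0[OF XS, of H]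
    by (intro mult_mono) (auto simp: field_simps)
  finally have le: "trace (L0mat H ** Xl) \<le> 2 * (v \<bullet> v)" by simp
  have "tau H \<le> trace (L0mat H ** Xl)"
    unfolding tau_def
  proof (rule cInf_lower)
    show "trace (L0mat H ** Xl) \<in> (\<lambda>X. trace (L0mat H ** X)) ` (SDPset \<inter> Hset)"
      using XlS XlH by blast
    show "bdd_below ((\<lambda>X. trace (L0mat H ** X)) ` (SDPset \<inter> Hset))"
      by (rule bdd_belowI[of _ 0]) (auto intro: trace_nonneg_L0)
  qed
  then show ?thesis using le by linarith
qed



lemma Basis_vec_real: "(Basis :: (real^'n::finite) set) = (\<lambda>i. axis i 1) ` UNIV"
  by (auto simp: Basis_vec_def)

lemma prod_basis:
  fixes v :: "real^'n::finite" and F :: "real \<Rightarrow> ennreal"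
  shows "(\<Prod>b\<in>Basis. F (v \<bullet> b)) = (\<Prod>i\<in>UNIV. F (v$i))"
proof -
  have inj: "inj_on (\<lambda>i::'n. axis i (1::real)) UNIV" by (auto simp: inj_on_def axis_eq_axis)
  show ?thesis unfolding Basis_vec_real by (simp add: prod.reindex[OF inj] inner_axis)
qed

lemma card_basis_vec: "card (Basis :: (real^'n::finite) set) = CARD('n)"
proof -
  have inj: "inj_on (\<lambda>i::'n. axis i (1::real)) UNIV" by (auto simp: inj_on_def axis_eq_axis)
  show ?thesis unfolding Basis_vec_real by (simp add: card_image[OF inj])
qed

lemma nn_integral_prod_vec:
  fixes F :: "real \<Rightarrow> ennreal"
  assumes [measurable]: "F \<in> borel_measurable borel"
  shows "(\<integral>\<^sup>+v. (\<Prod>i\<in>UNIV. F ((v::real^'n::finite)$i)) \<partial>lborel) = (\<integral>\<^sup>+x. F x \<partial>lborel) ^ CARD('n)"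
proof -
  have "(\<integral>\<^sup>+v. (\<Prod>i\<in>UNIV. F ((v::real^'n)$i)) \<partial>lborel) = (\<integral>\<^sup>+v. (\<Prod>b\<in>Basis. F ((v::real^'n) \<bullet> b)) \<partial>lborel)"
    by (simp add: prod_basis)
  also have "\<dots> = (\<Prod>b\<in>(Basis::(real^'n) set). (\<integral>\<^sup>+x. F x \<partial>lborel))"
    by (rule nn_integral_lborel_prod) auto
  also have "\<dots> = (\<integral>\<^sup>+x. F x \<partial>lborel) ^ CARD('n)" by (simp add: card_basis_vec)
  finally show ?thesis .
qed

lemma nn_integral_normal: "\<sigma> > 0 \<Longrightarrow> (\<integral>\<^sup>+x. ennreal (normal_density m \<sigma> x) \<partial>lborel) = 1"
proof -
  assume s: "\<sigma> > 0"
  interpret prob_space "density lborel (\<lambda>x. ennreal (normal_density m \<sigma> x))"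
    using prob_space_normal_density[OF s] .
  have "emeasure (density lborel (\<lambda>x. ennreal (normal_density m \<sigma> x))) UNIV = 1"
    using emeasure_space_1 by simp
  then show ?thesis by (simp add: emeasure_density)
qed

lemma gauss_dens: "gauss_vec \<rho> = density lborel (\<lambda>v. (\<Prod>i\<in>UNIV. ennreal (normal_density 0 (sqrt (1 / \<rho>)) (v $ i))))"
  unfolding gauss_vec_def
  by (simp add: prod_ennreal normal_density_nonneg)

lemma gauss_prob: "\<rho> > 0 \<Longrightarrow> prob_space (gauss_vec \<rho> :: (real^'n::finite) measure)"
proof (rule prob_spaceI)
  assume r: "\<rho> > 0"
  have "emeasure (gauss_vec \<rho> :: (real^'n) measure) (space (gauss_vec \<rho>)) =
     (\<integral>\<^sup>+v. (\<Prod>i\<in>UNIV. ennreal (normal_density 0 (sqrt (1 / \<rho>)) ((v::real^'n) $ i))) \<partial>lborel)"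
    unfolding gauss_dens by (simp add: emeasure_density)
  also have "\<dots> = 1"
    using r by (subst nn_integral_prod_vec[where F="\<lambda>x. ennreal (normal_density 0 (sqrt (1/\<rho>)) x)"])
      (auto simp: nn_integral_normal)
  finally show "emeasure (gauss_vec \<rho> :: (real^'n) measure) (space (gauss_vec \<rho>)) = 1" .
qed

lemma exp_normal:
  assumes r: "\<rho> > 0"
  shows "exp (\<rho> * x^2 / 4) * normal_density 0 (sqrt (1 / \<rho>)) x = sqrt 2 * normal_density 0 (sqrt 2 * sqrt (1 / \<rho>)) x"
proof -
  have a: "exp (\<rho> * x^2 / 4) * exp (-(x^2) / (2 * (1/\<rho>))) = exp (-(x^2) / (2 * (2 / \<rho>)))"
    unfolding exp_add[symmetric] using r by (simp add: field_simps)
  have b: "1 / sqrt (2 * pi * (1/\<rho>)) = sqrt 2 * (1 / sqrt (2 * pi * (2 / \<rho>)))"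
    using r by (simp add: real_sqrt_mult real_sqrt_divide field_simps)
  have s1: "(sqrt (1 / \<rho>))^2 = 1 / \<rho>" using r by simp
  have s2: "(sqrt 2 * sqrt (1 / \<rho>))^2 = 2 / \<rho>" using r by (simp add: power_mult_distrib)
  have "exp (\<rho> * x^2 / 4) * normal_density 0 (sqrt (1 / \<rho>)) x
      = 1 / sqrt (2 * pi * (1/\<rho>)) * (exp (\<rho> * x^2 / 4) * exp (-(x^2) / (2 * (1/\<rho>))))"
    unfolding normal_density_def s1 by simp
  also have "\<dots> = sqrt 2 * (1 / sqrt (2 * pi * (2 / \<rho>)) * exp (-(x^2) / (2 * (2 / \<rho>))))"
    unfolding a b by (simp only: mult.assoc)
  also have "\<dots> = sqrt 2 * normal_density 0 (sqrt 2 * sqrt (1 / \<rho>)) x"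
    unfolding normal_density_def s2 by simp
  finally show ?thesis .
qed

lemma int_exp_normal:
  assumes r: "\<rho> > 0"
  shows "(\<integral>\<^sup>+x. ennreal (exp (\<rho> * x^2 / 4) * normal_density 0 (sqrt (1 / \<rho>)) x) \<partial>lborel) = ennreal (sqrt 2)"
proof -
  have "(\<integral>\<^sup>+x. ennreal (exp (\<rho> * x^2 / 4) * normal_density 0 (sqrt (1 / \<rho>)) x) \<partial>lborel)
      = (\<integral>\<^sup>+x. ennreal (sqrt 2) * ennreal (normal_density 0 (sqrt 2 * sqrt (1 / \<rho>)) x) \<partial>lborel)"
    using r by (simp add: exp_normal ennreal_mult normal_density_nonneg)
  also have "\<dots> = ennreal (sqrt 2) * (\<integral>\<^sup>+x. ennreal (normal_density 0 (sqrt 2 * sqrt (1 / \<rho>)) x) \<partial>lborel)"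
    by (rule nn_integral_cmult) simp
  also have "\<dots> = ennreal (sqrt 2)" using r by (simp add: nn_integral_normal)
  finally show ?thesis .
qed

lemma gauss_tail:
  assumes r: "\<rho> > 0"
  shows "measure (gauss_vec \<rho> :: (real^'n::finite) measure) {v. s < 2 * (v \<bullet> v)} \<le> exp (-(\<rho> * s) / 8) * sqrt 2 ^ CARD('n)"
proof -
  let ?nd = "normal_density 0 (sqrt (1 / \<rho>))"
  let ?T = "{v::real^'n. s < 2 * (v \<bullet> v)}"
  have Tm: "?T \<in> sets borel" by measurable
  have "emeasure (gauss_vec \<rho> :: (real^'n) measure) ?T = (\<integral>\<^sup>+v. (\<Prod>i\<in>UNIV. ennreal (?nd (v $ i))) * indicator ?T v \<partial>lborel)"
    unfolding gauss_dens using Tm by (subst emeasure_density) auto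
  also have "\<dots> \<le> (\<integral>\<^sup>+v. ennreal (exp (-(\<rho> * s) / 8)) * (\<Prod>i\<in>UNIV. ennreal (exp (\<rho> * ((v::real^'n)$i)^2 / 4) * ?nd (v $ i))) \<partial>lborel)"
  proof (rule nn_integral_mono)
    fix v :: "real^'n"
    have P: "(\<Prod>i\<in>UNIV. ennreal (?nd (v $ i))) = ennreal (\<Prod>i\<in>UNIV. ?nd (v $ i))"
      by (simp add: prod_ennreal normal_density_nonneg)
    have Q: "ennreal (exp (-(\<rho> * s) / 8)) * (\<Prod>i\<in>UNIV. ennreal (exp (\<rho> * (v$i)^2 / 4) * ?nd (v $ i)))
       = ennreal (exp (-(\<rho> * s) / 8) * (exp (\<rho> * (v \<bullet> v) / 4) * (\<Prod>i\<in>UNIV. ?nd (v $ i))))"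
    proof -
      have "(\<Prod>i\<in>UNIV. ennreal (exp (\<rho> * (v$i)^2 / 4) * ?nd (v $ i))) = ennreal (\<Prod>i\<in>UNIV. exp (\<rho> * (v$i)^2 / 4) * ?nd (v $ i))"
        by (simp add: prod_ennreal normal_density_nonneg)
      also have "(\<Prod>i\<in>UNIV. exp (\<rho> * (v$i)^2 / 4) * ?nd (v $ i)) = exp (\<rho> * (v \<bullet> v) / 4) * (\<Prod>i\<in>UNIV. ?nd (v $ i))"
        by (simp add: prod.distrib exp_sum[symmetric] inner_vec_def power2_eq_square sum_divide_distrib sum_distrib_left)
      finally have R: "(\<Prod>i\<in>UNIV. ennreal (exp (\<rho> * (v$i)^2 / 4) * ?nd (v $ i))) = ennreal (exp (\<rho> * (v \<bullet> v) / 4) * (\<Prod>i\<in>UNIV. ?nd (v $ i)))" .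
      have nn: "0 \<le> exp (\<rho> * (v \<bullet> v) / 4) * (\<Prod>i\<in>UNIV. ?nd (v $ i))"
        by (intro mult_nonneg_nonneg prod_nonneg) (auto simp: normal_density_nonneg)
      show ?thesis unfolding R using ennreal_mult[OF exp_ge_zero nn] by simp
    qed
    show "(\<Prod>i\<in>UNIV. ennreal (?nd (v $ i))) * indicator ?T v \<le> ennreal (exp (-(\<rho> * s) / 8)) * (\<Prod>i\<in>UNIV. ennreal (exp (\<rho> * (v$i)^2 / 4) * ?nd (v $ i)))"
    proof (cases "v \<in> ?T")
      case True
      have "exp (-(\<rho> * s) / 8) * exp (\<rho> * (v \<bullet> v) / 4) \<ge> 1"
        unfolding exp_add[symmetric] one_le_exp_iff
        using True r by (simp add: algebra_simps)
      from mult_right_mono[OF this prod_nonneg[of UNIV "\<lambda>i. ?nd (v$i)"]]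
      have "(\<Prod>i\<in>UNIV. ?nd (v $ i)) \<le> exp (-(\<rho> * s) / 8) * (exp (\<rho> * (v \<bullet> v) / 4) * (\<Prod>i\<in>UNIV. ?nd (v $ i)))"
        by (simp add: normal_density_nonneg mult.assoc)
      then show ?thesis using True unfolding P Q by (simp add: ennreal_leI)
    qed simp
  qed
  also have "\<dots> = ennreal (exp (-(\<rho> * s) / 8)) * (\<integral>\<^sup>+v. (\<Prod>i\<in>UNIV. ennreal (exp (\<rho> * ((v::real^'n)$i)^2 / 4) * ?nd (v $ i))) \<partial>lborel)"
    by (rule nn_integral_cmult) measurable
  also have "\<dots> = ennreal (exp (-(\<rho> * s) / 8)) * ennreal (sqrt 2) ^ CARD('n)"
    by (subst nn_integral_prod_vec[where F="\<lambda>x. ennreal (exp (\<rho> * x^2 / 4) * ?nd x)"])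
      (auto simp: int_exp_normal[OF r])
  also have "\<dots> = ennreal (exp (-(\<rho> * s) / 8) * sqrt 2 ^ CARD('n))"
    by (simp add: ennreal_mult ennreal_power)
  finally have E: "emeasure (gauss_vec \<rho> :: (real^'n) measure) ?T \<le> ennreal (exp (-(\<rho> * s) / 8) * sqrt 2 ^ CARD('n))" .
  interpret prob_space "gauss_vec \<rho> :: (real^'n) measure" using gauss_prob[OF r] .
  show ?thesis using E by (simp add: emeasure_eq_measure)
qed



lemma tau_cont:
  assumes "X \<in> SDPset"
  shows "continuous_on UNIV (\<lambda>H::real^'m::finite^'n::finite. trace (L0mat H ** X))"
proof -
  have "(\<lambda>H::real^'m^'n. trace (L0mat H ** X)) = (\<lambda>H. \<Sum>k\<in>UNIV. qf X ((H ** Mmat)$k))"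
    using assms by (intro ext) (simp add: L0_eq trace_PtPX SDPset_def)
  also have "\<dots> = (\<lambda>H. \<Sum>k\<in>UNIV. \<Sum>l\<in>UNIV. \<Sum>j\<in>UNIV.
      (\<Sum>a\<in>UNIV. H$k$a * Mmat$a$l) * X$l$j * (\<Sum>a\<in>UNIV. H$k$a * Mmat$a$j))"
    by (simp add: qf_sum matrix_matrix_mult_def)
  finally show ?thesis by (simp only:) (intro continuous_intros)
qed

lemma tau_meas: "tau \<in> borel_measurable (borel :: (real^'m::finite^'n::finite) measure)"
  unfolding borel_measurable_iff_less
proof
  fix a
  show "{w \<in> space (borel :: (real^'m^'n) measure). tau w < a} \<in> sets borel"
  proof (cases "SDPset \<inter> Hset = ({} :: 'm sqm set)")
    case True
    then show ?thesis unfolding tau_def by (cases "Inf ({}::real set) < a") auto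
  next
    case False
    have "{w \<in> space (borel :: (real^'m^'n) measure). tau w < a} =
          (\<Union>X\<in>SDPset \<inter> Hset. {w. trace (L0mat w ** X) < a})"
    proof -
      have "tau w < a \<longleftrightarrow> (\<exists>X\<in>SDPset \<inter> Hset. trace (L0mat w ** X) < a)" for w :: "real^'m^'n"
        unfolding tau_def
        by (subst cInf_less_iff) (use False in \<open>auto intro!: bdd_belowI[of _ 0] trace_nonneg_L0\<close>)
      then show ?thesis by auto
    qed
    also have "open \<dots>"
      by (intro open_UN ballI open_Collect_less tau_cont continuous_on_const) auto
    finally show ?thesis by simp
  qed
qed

lemma space_gauss: "space (gauss_vec \<rho>) = UNIV"
  by (simp add: gauss_vec_def)

lemma sets_gauss: "sets (gauss_vec \<rho>) = sets borel"
  by (simp add: gauss_vec_def)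

lemma err_bound:
  fixes \<mu> :: "(real^('m::finite)^('n::finite)) measure"
    and sel :: "'m sqm \<Rightarrow> 'm sqm"
  assumes P: "prob_space \<mu>" and S: "sets \<mu> = sets borel" and sel: "is_selection_rule sel"
    and r: "\<rho> > 0"
  shows "measure (\<mu> \<Otimes>\<^sub>M gauss_vec \<rho>)
            {(H, v) \<in> space (\<mu> \<Otimes>\<^sub>M gauss_vec \<rho>). s_sdr sel H (H *v ones + v) \<noteq> ones}
         \<le> measure \<mu> {H \<in> space \<mu>. tau H \<le> s} + exp (-(\<rho> * s) / 8) * sqrt 2 ^ CARD('n)"
proof -
  let ?N = "gauss_vec \<rho> :: (real^'n) measure"
  interpret N: prob_space ?N using gauss_prob[OF r] .
  interpret M: prob_space \<mu> using P .
  interpret pair_prob_space \<mu> ?N ..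
  have spm: "space \<mu> = UNIV" using S by (metis sets_eq_imp_space_eq space_borel)
  define B1 where "B1 = {H \<in> space \<mu>. tau H \<le> s} \<times> space ?N"
  define B2 where "B2 = space \<mu> \<times> {v::real^'n. s < 2 * (v \<bullet> v)}"
  have tmeas[measurable]: "tau \<in> borel_measurable \<mu>"
    using tau_meas by (simp add: measurable_cong_sets[OF S refl])
  have tm: "{H \<in> space \<mu>. tau H \<le> s} \<in> sets \<mu>" by measurable
  have vm: "{v::real^'n. s < 2 * (v \<bullet> v)} \<in> sets ?N" unfolding sets_gauss by measurable
  have B1m: "B1 \<in> sets (\<mu> \<Otimes>\<^sub>M ?N)" unfolding B1_def using tm by auto
  have B2m: "B2 \<in> sets (\<mu> \<Otimes>\<^sub>M ?N)" unfolding B2_def using vm by auto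
  have sub: "{(H, v) \<in> space (\<mu> \<Otimes>\<^sub>M ?N). s_sdr sel H (H *v ones + v) \<noteq> ones} \<subseteq> B1 \<union> B2"
  proof clarify
    fix H v assume "(H, v) \<in> space (\<mu> \<Otimes>\<^sub>M ?N)" "s_sdr sel H (H *v ones + v) \<noteq> ones" "(H, v) \<notin> B2"
    moreover have "tau H \<le> 2 * (v \<bullet> v)" using det_bound[OF sel] calculation(2) .
    ultimately show "(H, v) \<in> B1" by (auto simp: B1_def B2_def spm space_gauss space_pair_measure)
  qed
  have "measure (\<mu> \<Otimes>\<^sub>M ?N) {(H, v) \<in> space (\<mu> \<Otimes>\<^sub>M ?N). s_sdr sel H (H *v ones + v) \<noteq> ones}
      \<le> measure (\<mu> \<Otimes>\<^sub>M ?N) (B1 \<union> B2)"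
    by (rule P.finite_measure_mono[OF sub]) (use B1m B2m in auto)
  also have "\<dots> \<le> measure (\<mu> \<Otimes>\<^sub>M ?N) B1 + measure (\<mu> \<Otimes>\<^sub>M ?N) B2"
    by (rule measure_Un_le) (use B1m B2m in auto)
  also have "measure (\<mu> \<Otimes>\<^sub>M ?N) B1 = measure \<mu> {H \<in> space \<mu>. tau H \<le> s}"
    unfolding B1_def measure_def
    by (subst N.emeasure_pair_measure_Times) (use tm in \<open>auto simp: N.emeasure_space_1\<close>)
  also have "measure (\<mu> \<Otimes>\<^sub>M ?N) B2 = measure ?N {v. s < 2 * (v \<bullet> v)}"
    unfolding B2_def measure_def
    by (subst N.emeasure_pair_measure_Times) (use vm in \<open>auto simp: M.emeasure_space_1\<close>)
  also have "\<dots> \<le> exp (-(\<rho> * s) / 8) * sqrt 2 ^ CARD('n)" by (rule gauss_tail[OF r])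
  finally show ?thesis by simp
qed



lemma exp_le_from_bound:
  assumes h: "\<And>a. a < d \<Longrightarrow> eventually (\<lambda>\<rho>. F \<rho> \<le> \<rho> powr (-a)) at_top"
  shows "exp_le F d"
  unfolding exp_le_def
proof (rule ereal_le_epsilon2)
  fix e :: real assume e: "e > 0"
  have de: "d - e < d" using e by simp
  have "eventually (\<lambda>\<rho>. lnE (F \<rho>) / ereal (ln \<rho>) \<le> ereal (-(d - e))) at_top"
    using h[OF de] eventually_gt_at_top[of 1]
  proof (eventually_elim)
    case (elim \<rho>)
    have lp: "ln \<rho> > 0" using elim by simp
    show ?case
    proof (cases "F \<rho> > 0")
      case True
      have "ln (F \<rho>) \<le> ln (\<rho> powr (-(d - e)))" using True elim by (intro ln_mono) auto
      also have "\<dots> = -(d - e) * ln \<rho>" using elim by (simp add: ln_powr)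
      finally have "ln (F \<rho>) / ln \<rho> \<le> -(d - e)" using lp by (simp add: divide_le_eq)
      then show ?thesis using True lp by (simp add: lnE_def)
    next
      case False
      then show ?thesis using lp by (simp add: lnE_def)
    qed
  qed
  then have "Limsup at_top (\<lambda>\<rho>. lnE (F \<rho>) / ereal (ln \<rho>)) \<le> ereal (-(d - e))"
    by (rule Limsup_bounded)
  then show "Limsup at_top (\<lambda>\<rho>. lnE (F \<rho>) / ereal (ln \<rho>)) \<le> ereal (- d) + ereal e" by simp
qed

lemma bound_from_exp_le:
  assumes h: "exp_le f d" and nn: "\<And>\<rho>. f \<rho> \<ge> 0" and a: "a < d"
  shows "eventually (\<lambda>\<rho>. f \<rho> \<le> \<rho> powr (-a)) at_top"
proof -
  have "Limsup at_top (\<lambda>\<rho>. lnE (f \<rho>) / ereal (ln \<rho>)) < ereal (-a)"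
  proof -
    have "ereal (-d) < ereal (-a)" using a by simp
    then show ?thesis using h unfolding exp_le_def by (rule le_less_trans[rotated])
  qed
  then have "eventually (\<lambda>\<rho>. lnE (f \<rho>) / ereal (ln \<rho>) < ereal (-a)) at_top"
    by (rule Limsup_lessD)
  then show ?thesis using eventually_gt_at_top[of 1]
  proof eventually_elim
    case (elim \<rho>)
    have lp: "ln \<rho> > 0" using elim by simp
    show ?case
    proof (cases "f \<rho> > 0")
      case True
      then have "ln (f \<rho>) / ln \<rho> < -a" using elim(1) lp by (simp add: lnE_def)
      then have "ln (f \<rho>) < -a * ln \<rho>" using lp by (simp add: divide_less_eq)
      then have "f \<rho> < exp (-a * ln \<rho>)" using True by (metis exp_less_cancel_iff exp_ln)
      then show ?thesis using elim by (simp add: powr_def)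
    next
      case False
      then show ?thesis using nn[of \<rho>] by simp
    qed
  qed
qed

lemma combine:
  fixes f g :: "real \<Rightarrow> real" and K :: real
  assumes hf: "\<And>b. b < d \<Longrightarrow> eventually (\<lambda>\<rho>. f \<rho> \<le> \<rho> powr (-b)) at_top"
    and hg: "\<And>\<rho> \<epsilon>. \<rho> > 0 \<Longrightarrow> g \<rho> \<le> f (\<rho> powr (1 - \<epsilon>)) + K * exp (-(\<rho> powr \<epsilon>) / 8)"
    and g1: "\<And>\<rho>. \<rho> > 0 \<Longrightarrow> g \<rho> \<le> 1"
    and K: "K > 0"
    and a: "a < d"
  shows "eventually (\<lambda>\<rho>. g \<rho> \<le> \<rho> powr (-a)) at_top"
proof (cases "a \<le> 0")
  case True
  show ?thesis using eventually_ge_at_top[of 1]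
  proof eventually_elim
    case (elim \<rho>)
    have "1 \<le> \<rho> powr (-a)" using True elim by (simp add: ge_one_powr_ge_zero)
    then show ?case using g1[of \<rho>] elim by linarith
  qed
next
  case False
  then have a0: "a > 0" by simp
  define b where "b = (a + d) / 2"
  define \<epsilon> where "\<epsilon> = (b - a) / (2 * b)"
  define c where "c = (a + b) / 2"
  have b: "a < b" "b < d" "b > 0" using a a0 by (auto simp: b_def)
  have e: "\<epsilon> > 0" "\<epsilon> < 1" using b a0 by (auto simp: \<epsilon>_def field_simps)
  have ce: "(1 - \<epsilon>) * b = c" using b by (simp add: \<epsilon>_def c_def field_simps)
  have ca: "c > a" using b a0 by (simp add: c_def)
  have lim: "filterlim (\<lambda>\<rho>::real. \<rho> powr (1 - \<epsilon>)) at_top at_top"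
    using e by real_asymp
  have ev1: "eventually (\<lambda>\<rho>. f (\<rho> powr (1 - \<epsilon>)) \<le> (\<rho> powr (1 - \<epsilon>)) powr (-b)) at_top"
    using filterlim_iff[THEN iffD1, OF lim, rule_format, OF hf[OF b(2)]] .
  have ev2: "eventually (\<lambda>\<rho>::real. \<rho> powr (-c) \<le> \<rho> powr (-a) / 2) at_top"
    using ca a0 by real_asymp
  have ev3: "eventually (\<lambda>\<rho>::real. K * exp (-(\<rho> powr \<epsilon>) / 8) \<le> \<rho> powr (-a) / 2) at_top"
    using e K a0 by real_asymp
  show ?thesis using ev1 ev2 ev3 eventually_gt_at_top[of 0]
  proof eventually_elim
    case (elim \<rho>)
    have "(\<rho> powr (1 - \<epsilon>)) powr (-b) = \<rho> powr (-c)"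
      using elim(4) by (simp add: powr_powr ce[symmetric])
    then show ?case using hg[OF elim(4), of \<epsilon>] elim by linarith
  qed
qed



theorem lemma2:
  fixes \<mu> :: "(real^('m::finite)^('n::finite)) measure"
    and sel :: "'m sqm \<Rightarrow> 'm sqm"
    and d :: real
  assumes "prob_space \<mu>"
    and "sets \<mu> = sets borel"
    and "is_selection_rule sel"
    and "d \<ge> 0"
    and "exp_le (\<lambda>\<rho>. measure \<mu> {H \<in> space \<mu>. tau H \<le> 1 / \<rho>}) d"
  shows "exp_le (\<lambda>\<rho>. measure (\<mu> \<Otimes>\<^sub>M gauss_vec \<rho>)
            {(H, v) \<in> space (\<mu> \<Otimes>\<^sub>M gauss_vec \<rho>). s_sdr sel H (H *v ones + v) \<noteq> ones}) d"
proof (rule exp_le_from_bound)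
  fix a assume a: "a < d"
  let ?f = "\<lambda>\<rho>. measure \<mu> {H \<in> space \<mu>. tau H \<le> 1 / \<rho>}"
  let ?g = "\<lambda>\<rho>. measure (\<mu> \<Otimes>\<^sub>M gauss_vec \<rho>)
            {(H, v) \<in> space (\<mu> \<Otimes>\<^sub>M gauss_vec \<rho>). s_sdr sel H (H *v ones + v) \<noteq> ones}"
  let ?K = "sqrt 2 ^ CARD('n)"
  show "eventually (\<lambda>\<rho>. ?g \<rho> \<le> \<rho> powr (-a)) at_top"
  proof (rule combine[of d ?f ?g ?K])
    show "\<And>b. b < d \<Longrightarrow> eventually (\<lambda>\<rho>. ?f \<rho> \<le> \<rho> powr (-b)) at_top"
      by (rule bound_from_exp_le[OF assms(5)]) auto
    show "?g \<rho> \<le> ?f (\<rho> powr (1 - \<epsilon>)) + ?K * exp (-(\<rho> powr \<epsilon>) / 8)" if r: "\<rho> > 0" for \<rho> \<epsilon>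
    proof -
      have "\<rho> * (1 / \<rho> powr (1 - \<epsilon>)) = \<rho> powr 1 / \<rho> powr (1 - \<epsilon>)"
        using r by simp
      also have "\<dots> = \<rho> powr (1 - (1 - \<epsilon>))" by (rule powr_diff[symmetric])
      also have "\<dots> = \<rho> powr \<epsilon>" by simp
      finally have "\<rho> * (1 / \<rho> powr (1 - \<epsilon>)) = \<rho> powr \<epsilon>" .
      then show ?thesis
        using err_bound[OF assms(1,2,3) r, of "1 / \<rho> powr (1 - \<epsilon>)"] by (simp add: mult.commute)
    qed
    show "?g \<rho> \<le> 1" if r: "\<rho> > 0" for \<rho>
    proof -
      interpret N: prob_space "gauss_vec \<rho> :: (real^'n) measure" using gauss_prob[OF r] .
      interpret M: prob_space \<mu> using assms(1) .
      interpret pair_prob_space \<mu> "gauss_vec \<rho> :: (real^'n) measure" ..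
      show ?thesis by (rule P.prob_le_1)
    qed
    show "?K > 0" by simp
    show "a < d" by (rule a)
  qed
qed


end
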